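(* Let $T\geq 3$ be an integer, $L>0$, $D>0$, and let $\mathcal{K}\subset\mathbb{R}^d$ be a nonempty closed convex set with diameter at most $D$. For $t=1,\dots,T$ let $\ell_t(x)=\langle g_t,x\rangle$ be linear cost functions with $\|g_t\|\leq L$. Set $$\eta=\frac{D}{2L}\left(\frac{3}{T}\right)^{3/4},\qquad \sigma=\min\left(1,\sqrt{\frac{3}{T}}\right).$$ Let $x_1\in\mathcal{K}$ and define the Online Frank--Wolfe iterates: for $t=1,\dots,T$, $\mathrm{dir}_t=\eta\sum_{s=1}^t g_s+(x_t-x_1)$, $v_t\in\arg\min_{v\in\mathcal{K}}\langle\mathrm{dir}_t,v\rangle$, $x_{t+1}=(1-\sigma)x_t+\sigma v_t$. Define the Follow-The-Regularized-Leader iterates $y_1=x_1$ and, for $t=1,\dots,T$, $$y_{t+1}=\arg\min_{y\in\mathcal{K}}\ \eta\Big\langle\sum_{s=1}^t g_s,y\Big\rangle+\frac12\|y-x_1\|^2.$$ For $0\leq t\leq T$ define the potential $$\phi_t\triangleq\sum_{s=1}^t\langle g_s,x_s-y_{t+1}\rangle+\frac{1}{6\eta}\|x_{t+1}-y_{t+1}\|^2-\frac{1}{2\eta}\|y_{t+1}-x_1\|^2.$$ Then for every $t\in\{1,\dots,T\}$, $$\phi_t-\phi_{t-1}\leq\frac{2D}{L\,3^{3/4}T^{1/4}}\|g_t\|^2+\frac{L}{D\,3^{3/4}T^{1/4}}\|x_t-v_t\|^2.$$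
   Context: $\|\cdot\|$ is the Euclidean norm; $v_t$ is any minimizer of the linear function over $\mathcal{K}$ (the output of a linear optimization oracle). The FTRL minimizer is unique by strong convexity. *)

theory Defs
  imports "HOL-Analysis.Analysis"
begin

definition ofw_phi :: "real \<Rightarrow> (nat \<Rightarrow> 'a::euclidean_space) \<Rightarrow> (nat \<Rightarrow> 'a) \<Rightarrow> (nat \<Rightarrow> 'a) \<Rightarrow> nat \<Rightarrow> real" where
  "ofw_phi \<eta> g x y t =
     (\<Sum>s=1..t. g s \<bullet> (x s - y (t+1)))
     + (1 / (6*\<eta>)) * (norm (x (t+1) - y (t+1)))^2
     - (1 / (2*\<eta>)) * (norm (y (t+1) - x 1))^2"

end

theory Submission
  imports Defs
begin


lemma step2:
  fixes Z X V G u x1 :: "'a::real_inner"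
  assumes s0: "\<sigma> > 0"
  and C: "(G + u + Z - x1) \<bullet> (V - Z) \<ge> 0"
  and D: "(G + u + X - x1) \<bullet> V \<le> (G + u + X - x1) \<bullet> Z"
  shows "(norm ((1-\<sigma>) *\<^sub>R X + \<sigma> *\<^sub>R V - Z))^2 \<le> (1 - 2*\<sigma>) * (norm (X - Z))^2 + \<sigma>^2 * (norm (X - V))^2"
proof -
  have key: "(X - Z) \<bullet> (V - X) \<le> - ((norm (X - Z))^2)"
  proof -
    have "(X - Z) \<bullet> (V - X) = (G + u + X - x1) \<bullet> (V - X) - (G + u + Z - x1) \<bullet> (V - Z) - (G + u + Z - x1) \<bullet> (Z - X)"
      by (simp add: inner_diff_left inner_diff_right inner_add_left inner_add_right inner_commute)
    moreover have "- ((norm (X - Z))^2) = (G + u + X - x1) \<bullet> (Z - X) - (G + u + Z - x1) \<bullet> (Z - X)"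
      by (simp add: power2_norm_eq_inner inner_diff_left inner_diff_right inner_add_left inner_add_right inner_commute)
    moreover have "(G + u + X - x1) \<bullet> (V - X) \<le> (G + u + X - x1) \<bullet> (Z - X)"
      using D by (simp add: inner_diff_right)
    ultimately show ?thesis using C by linarith
  qed
  have e: "(1-\<sigma>) *\<^sub>R X + \<sigma> *\<^sub>R V - Z = (X - Z) + \<sigma> *\<^sub>R (V - X)"
    by (simp add: algebra_simps)
  have "(norm ((1-\<sigma>) *\<^sub>R X + \<sigma> *\<^sub>R V - Z))^2 = (norm (X - Z))^2 + 2*\<sigma>*((X - Z) \<bullet> (V - X)) + \<sigma>^2 * (norm (X - V))^2"
    unfolding e power2_norm_eq_inner
    by (simp add: inner_add_left inner_add_right inner_commute power2_eq_square algebra_simps inner_diff_left inner_diff_right)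
  moreover have "2*\<sigma>*((X - Z) \<bullet> (V - X)) \<le> 2*\<sigma>*(- ((norm (X - Z))^2))"
    using key s0 by (intro mult_left_mono) auto
  ultimately show ?thesis by (simp add: algebra_simps)
qed

lemma step4:
  fixes p q u :: "'a::real_inner"
  assumes s0: "\<sigma> > 0" and s1: "\<sigma> \<le> 1" and H: "q \<bullet> q \<le> u \<bullet> q"
  shows "u \<bullet> (p + q) - 1/2 * (norm q)^2 + 1/6 * ((1 - 2*\<sigma>) * (norm (p + q))^2 - (norm p)^2)
     \<le> 4/(3*\<sigma>) * (norm u)^2"
proof -
  define c where "c = 1 - 2*\<sigma>"
  define w where "w = u + (c/3) *\<^sub>R q"
  define a where "a = u \<bullet> q"
  define b where "b = q \<bullet> q"
  define U where "U = u \<bullet> u"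
  have h1: "p \<bullet> w - (\<sigma>/3) * (p \<bullet> p) \<le> 3/(4*\<sigma>) * (w \<bullet> w)"
  proof -
    have "0 \<le> (\<sigma>/3) * ((p - (3/(2*\<sigma>)) *\<^sub>R w) \<bullet> (p - (3/(2*\<sigma>)) *\<^sub>R w))"
      using s0 by simp
    also have "\<dots> = (\<sigma>/3) * (p \<bullet> p) - p \<bullet> w + 3/(4*\<sigma>) * (w \<bullet> w)"
      using s0 by (simp add: inner_diff_left inner_diff_right inner_commute field_simps)
    finally show ?thesis by linarith
  qed
  have ww: "w \<bullet> w = U + (2*c/3) * a + (c^2/9) * b"
    unfolding w_def U_def a_def b_def
    by (simp add: inner_add_left inner_add_right inner_commute power2_eq_square algebra_simps)
  have E: "u \<bullet> (p + q) - 1/2 * (norm q)^2 + 1/6 * ((1 - 2*\<sigma>) * (norm (p + q))^2 - (norm p)^2)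
      = (p \<bullet> w - (\<sigma>/3) * (p \<bullet> p)) + a - b/2 + c*b/6"
    unfolding w_def a_def b_def c_def power2_norm_eq_inner
    by (simp add: inner_add_left inner_add_right inner_commute algebra_simps) (simp add: algebra_simps diff_divide_distrib add_divide_distrib)
  have ba: "b \<le> a" using H by (simp add: a_def b_def)
  have b0: "0 \<le> b" by (simp add: b_def)
  have cs: "a \<le> norm u * norm q" unfolding a_def by (rule norm_cauchy_schwarz)
  have nq: "norm q \<le> norm u"
  proof (cases "norm q = 0")
    case True then show ?thesis by simp
  next
    case False
    then have "norm q > 0" by simp
    moreover have "norm q * norm q \<le> norm u * norm q"
      using ba cs by (simp add: b_def power2_norm_eq_inner[symmetric] power2_eq_square)
    ultimately show ?thesis by simp
  qed
  have aU: "a \<le> U"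
  proof -
    have "norm u * norm q \<le> norm u * norm u" using nq by (simp add: mult_left_mono)
    then show ?thesis using cs by (simp add: U_def power2_norm_eq_inner[symmetric] power2_eq_square)
  qed
  have bU: "b \<le> U" using ba aU by linarith
  have c2: "c^2 \<le> 1" using s0 s1 unfolding c_def by (simp add: abs_square_le_1)
  have c2b: "c^2 * b \<le> U" using c2 b0 bU using mult_right_mono[OF c2 b0] by linarith
  have eq: "3/(4*\<sigma>) * (U + (2*c/3) * a + (c^2/9) * b) + a - b/2 + c*b/6
      = 3*U/(4*\<sigma>) + a/(2*\<sigma>) + (c^2*b)/(12*\<sigma>) - b/3 - \<sigma>*b/3"
    using s0 unfolding c_def by (simp add: field_simps power2_eq_square)
  have t1: "a/(2*\<sigma>) \<le> U/(2*\<sigma>)" using aU s0 by (simp add: divide_right_mono)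
  have t2: "(c^2*b)/(12*\<sigma>) \<le> U/(12*\<sigma>)" using c2b s0 by (simp add: divide_right_mono)
  have t3: "0 \<le> \<sigma>*b" using s0 b0 by simp
  have t4: "3*U/(4*\<sigma>) + U/(2*\<sigma>) + U/(12*\<sigma>) = 4/(3*\<sigma>) * U"
    using s0 by (simp add: field_simps)
  have "u \<bullet> (p + q) - 1/2 * (norm q)^2 + 1/6 * ((1 - 2*\<sigma>) * (norm (p + q))^2 - (norm p)^2)
      \<le> 3/(4*\<sigma>) * (U + (2*c/3) * a + (c^2/9) * b) + a - b/2 + c*b/6"
    using E h1 ww by simp
  also have "\<dots> \<le> 4/(3*\<sigma>) * U" using eq t1 t2 t3 t4 b0 by linarith
  finally show ?thesis by (simp add: U_def power2_norm_eq_inner)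
qed

lemma FO:
  fixes S y w x1 :: "'a::real_inner"
  assumes K: "convex K" and yK: "y \<in> K" and wK: "w \<in> K"
    and m: "\<forall>w\<in>K. \<eta> * (S \<bullet> y) + 1/2 * (norm (y - x1))^2 \<le> \<eta> * (S \<bullet> w) + 1/2 * (norm (w - x1))^2"
  shows "(\<eta> *\<^sub>R S + (y - x1)) \<bullet> (w - y) \<ge> 0"
proof (rule ccontr)
  define c where "c = (\<eta> *\<^sub>R S + (y - x1)) \<bullet> (w - y)"
  define n where "n = (w - y) \<bullet> (w - y)"
  assume "\<not> ?thesis"
  then have c0: "c < 0" by (simp add: c_def)
  have n0: "n > 0"
  proof -
    have "w \<noteq> y" using c0 by (auto simp: c_def)
    then show ?thesis by (simp add: n_def)
  qed
  have gen: "0 \<le> l * c + l^2/2 * n" if l0: "0 \<le> l" and l1: "l \<le> 1" for l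
  proof -
    have "(1 - l) *\<^sub>R y + l *\<^sub>R w \<in> K"
      using convexD[OF K yK wK, of "1 - l" l] l0 l1 by simp
    then have "\<eta> * (S \<bullet> y) + 1/2 * (norm (y - x1))^2 \<le> \<eta> * (S \<bullet> ((1 - l) *\<^sub>R y + l *\<^sub>R w)) + 1/2 * (norm ((1 - l) *\<^sub>R y + l *\<^sub>R w - x1))^2"
      using m by blast
    moreover have "\<eta> * (S \<bullet> ((1 - l) *\<^sub>R y + l *\<^sub>R w)) + 1/2 * (norm ((1 - l) *\<^sub>R y + l *\<^sub>R w - x1))^2
        = \<eta> * (S \<bullet> y) + 1/2 * (norm (y - x1))^2 + (l * c + l^2/2 * n)"
    proof -
      have e: "(1 - l) *\<^sub>R y + l *\<^sub>R w = y + l *\<^sub>R (w - y)" by (simp add: algebra_simps)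
      show ?thesis unfolding e c_def n_def power2_norm_eq_inner
        by (simp add: inner_add_left inner_add_right inner_diff_left inner_diff_right inner_commute algebra_simps power2_eq_square)
    qed
    ultimately show ?thesis by linarith
  qed
  define l where "l = min 1 (- c / n) / 2"
  have l0: "0 < l" using c0 n0 by (simp add: l_def divide_neg_pos)
  have l1: "l \<le> 1" by (simp add: l_def)
  have ln: "l * n \<le> - c / 2"
  proof -
    have "min 1 (- c / n) * n \<le> (- c / n) * n" using n0 by (intro mult_right_mono) auto
    then show ?thesis using n0 by (simp add: l_def)
  qed
  have "l^2/2 * n \<le> l * (- c/2) / 2"
  proof -
    have "l^2/2 * n = l * (l * n) / 2" by (simp add: power2_eq_square)
    also have "\<dots> \<le> l * (- c/2) / 2"
    proof -
      have "l * (l * n) \<le> l * (- c/2)" using ln l0 by (intro mult_left_mono) auto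
      then show ?thesis by (simp add: mult.commute)
    qed
    finally show ?thesis .
  qed
  then have "l * c + l^2/2 * n \<le> l * c * (3/4)" by (simp add: algebra_simps)
  moreover have "l * c * (3/4) < 0" using l0 c0 by (simp add: mult_neg_pos)
  ultimately show False using gen[OF less_imp_le[OF l0] l1] by linarith
qed

lemma step1:
  fixes G u Y Z x1 :: "'a::real_inner"
  shows "- ((G + u) \<bullet> Z) - 1/2 * (norm (Z - x1))^2 + G \<bullet> Y + 1/2 * (norm (Y - x1))^2
      = - (u \<bullet> Z) - (G + (Y - x1)) \<bullet> (Z - Y) - 1/2 * (norm (Z - Y))^2"
  unfolding power2_norm_eq_inner
  by (simp add: inner_add_left inner_add_right inner_diff_left inner_diff_right inner_commute algebra_simps)

lemma core:
  fixes G u X Y Z V x1 :: "'a::real_inner"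
  assumes s0: "\<sigma> > 0" and s1: "\<sigma> \<le> 1"
  and A: "(G + (Y - x1)) \<bullet> (Z - Y) \<ge> 0"
  and B: "((G + u) + (Z - x1)) \<bullet> (Y - Z) \<ge> 0"
  and C: "((G + u) + (Z - x1)) \<bullet> (V - Z) \<ge> 0"
  and D: "((G + u) + (X - x1)) \<bullet> V \<le> ((G + u) + (X - x1)) \<bullet> Z"
  shows "u \<bullet> X - (G + u) \<bullet> Z - 1/2 * (norm (Z - x1))^2 + G \<bullet> Y + 1/2 * (norm (Y - x1))^2
     + 1/6 * ((norm ((1-\<sigma>) *\<^sub>R X + \<sigma> *\<^sub>R V - Z))^2 - (norm (X - Y))^2)
     \<le> 4/(3*\<sigma>) * (norm u)^2 + \<sigma>^2/6 * (norm (X - V))^2"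
proof -
  have s2: "(norm ((1-\<sigma>) *\<^sub>R X + \<sigma> *\<^sub>R V - Z))^2 \<le> (1 - 2*\<sigma>) * (norm (X - Z))^2 + \<sigma>^2 * (norm (X - V))^2"
    by (rule step2[OF s0, of G u Z x1 V X]) (use C D in \<open>simp_all add: algebra_simps\<close>)
  have s3: "(Y - Z) \<bullet> (Y - Z) \<le> u \<bullet> (Y - Z)"
  proof -
    have "(G + (Y - x1)) \<bullet> (Z - Y) + ((G + u) + (Z - x1)) \<bullet> (Y - Z) = u \<bullet> (Y - Z) - (Y - Z) \<bullet> (Y - Z)"
      by (simp add: inner_add_left inner_add_right inner_diff_left inner_diff_right inner_commute algebra_simps)
    then show ?thesis using A B by linarith
  qed
  note s4 = step4[OF s0 s1 s3, of "X - Y"]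
  have e1: "(X - Y) + (Y - Z) = X - Z" by simp
  have e2: "u \<bullet> X - u \<bullet> Z = u \<bullet> (X - Z)" by (simp add: inner_diff_right)
  have e3: "norm (Z - Y) = norm (Y - Z)" by (rule norm_minus_commute)
  have "u \<bullet> X - (G + u) \<bullet> Z - 1/2 * (norm (Z - x1))^2 + G \<bullet> Y + 1/2 * (norm (Y - x1))^2
      = u \<bullet> X - u \<bullet> Z - (G + (Y - x1)) \<bullet> (Z - Y) - 1/2 * (norm (Z - Y))^2"
    using step1[of G u Z x1 Y] by linarith
  then show ?thesis using s2 s4 A unfolding e1 e2 e3 by (simp add: algebra_simps) 
qed



theorem lemma1:
  fixes T :: nat and L D \<eta> \<sigma> :: real and K :: "'a::euclidean_space set"
    and g x v y :: "nat \<Rightarrow> 'a"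
  assumes T3: "T \<ge> 3" and Lpos: "L > 0" and Dpos: "D > 0"
    and Kne: "K \<noteq> {}" and Kclosed: "closed K" and Kconv: "convex K"
    and Kdiam: "\<forall>a\<in>K. \<forall>b\<in>K. norm (a - b) \<le> D"
    and gbound: "\<forall>t\<in>{1..T}. norm (g t) \<le> L"
    and eta_def: "\<eta> = D / (2*L) * (3 / real T) powr (3/4)"
    and sigma_def: "\<sigma> = min 1 (sqrt (3 / real T))"
    and x1: "x 1 \<in> K"
    and v_in: "\<forall>t\<in>{1..T}. v t \<in> K"
    and v_min: "\<forall>t\<in>{1..T}. \<forall>w\<in>K.
        (\<eta> *\<^sub>R (\<Sum>s=1..t. g s) + (x t - x 1)) \<bullet> v t
          \<le> (\<eta> *\<^sub>R (\<Sum>s=1..t. g s) + (x t - x 1)) \<bullet> w"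
    and x_step: "\<forall>t\<in>{1..T}. x (t+1) = (1 - \<sigma>) *\<^sub>R x t + \<sigma> *\<^sub>R v t"
    and y1: "y 1 = x 1"
    and y_in: "\<forall>t\<in>{1..T}. y (t+1) \<in> K"
    and y_min: "\<forall>t\<in>{1..T}. \<forall>w\<in>K.
        \<eta> * ((\<Sum>s=1..t. g s) \<bullet> y (t+1)) + 1/2 * (norm (y (t+1) - x 1))^2
          \<le> \<eta> * ((\<Sum>s=1..t. g s) \<bullet> w) + 1/2 * (norm (w - x 1))^2"
  shows "\<forall>t\<in>{1..T}. ofw_phi \<eta> g x y t - ofw_phi \<eta> g x y (t-1)
           \<le> 2*D / (L * 3 powr (3/4) * real T powr (1/4)) * (norm (g t))^2
             + L / (D * 3 powr (3/4) * real T powr (1/4)) * (norm (x t - v t))^2"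
  proof
  fix t assume t: "t \<in> {1..T}"
  then obtain m where tm: "t = Suc m" and mT: "m < T" by (cases t) auto
  have Tpos: "real T > 0" using T3 by simp
  define r where "r = (3 / real T) powr (1/4)"
  have r0: "r > 0" using Tpos by (simp add: r_def)
  have r3: "(3 / real T) powr (3/4) = r^3"
  proof -
    have "r^3 = r powr (real 3)" using r0 by (simp add: powr_realpow)
    also have "\<dots> = (3 / real T) powr (3/4)" unfolding r_def by (simp add: powr_powr)
    finally show ?thesis by simp
  qed
  have r2: "sqrt (3 / real T) = r^2"
  proof -
    have "r^2 = r powr (real 2)" using r0 by (simp add: powr_realpow)
    also have "\<dots> = (3 / real T) powr (1/2)" unfolding r_def by (simp add: powr_powr)
    also have "\<dots> = sqrt (3 / real T)" using Tpos by (simp add: powr_half_sqrt)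
    finally show ?thesis by simp
  qed
  have r33: "3 powr (3/4) * real T powr (1/4) = 3 / r"
  proof -
    have "r = 3 powr (1/4) / real T powr (1/4)" unfolding r_def using Tpos by (simp add: powr_divide)
    moreover have "3 powr (3/4) * 3 powr (1/4) = (3::real)"
      by (simp add: powr_add[symmetric])
    then have "(3::real) powr (3/4) = 3 / 3 powr (1/4)"
      by (simp add: eq_divide_eq)
    ultimately show ?thesis by simp
  qed
  have sle: "sqrt (3 / real T) \<le> 1" using T3 by simp
  have sig: "\<sigma> = r^2" using sle r2 sigma_def by simp
  have s0: "\<sigma> > 0" using sig r0 by simp
  have s1: "\<sigma> \<le> 1" using sig r2 sle by simp
  have eta: "\<eta> = D / (2*L) * r^3" using eta_def r3 by simp
  have eta0: "\<eta> > 0" using eta r0 Lpos Dpos by simp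
  define S' where "S' = (\<Sum>s=1..m. g s)"
  define G where "G = \<eta> *\<^sub>R S'"
  define u where "u = \<eta> *\<^sub>R g t"
  define X where "X = x t"
  define Y where "Y = y t"
  define Z where "Z = y (t+1)"
  define V where "V = v t"
  have St: "(\<Sum>s=1..t. g s) = S' + g t" unfolding S'_def tm by simp
  have GS: "\<eta> *\<^sub>R (\<Sum>s=1..t. g s) = G + u" unfolding St G_def u_def by (simp add: scaleR_right_distrib)
  have ZK: "Z \<in> K" using y_in t by (simp add: Z_def)
  have VK: "V \<in> K" using v_in t by (simp add: V_def)
  have ymin_t: "\<forall>w\<in>K. \<eta> * ((\<Sum>s=1..t. g s) \<bullet> Z) + 1/2 * (norm (Z - x 1))^2
          \<le> \<eta> * ((\<Sum>s=1..t. g s) \<bullet> w) + 1/2 * (norm (w - x 1))^2"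
    using y_min t by (simp add: Z_def)
  have YK_A: "Y \<in> K \<and> (G + (Y - x 1)) \<bullet> (Z - Y) \<ge> 0"
  proof (cases m)
    case 0
    then show ?thesis using x1 y1 by (simp add: Y_def G_def S'_def tm)
  next
    case (Suc k)
    then have m1: "m \<in> {1..T}" using mT by simp
    have YK: "Y \<in> K" using y_in m1 by (simp add: Y_def tm)
    have "\<forall>w\<in>K. \<eta> * (S' \<bullet> Y) + 1/2 * (norm (Y - x 1))^2
          \<le> \<eta> * (S' \<bullet> w) + 1/2 * (norm (w - x 1))^2"
      using y_min m1 by (simp add: Y_def tm S'_def)
    from FO[OF Kconv YK ZK this] show ?thesis using YK by (simp add: G_def)
  qed
  have A: "(G + (Y - x 1)) \<bullet> (Z - Y) \<ge> 0" using YK_A by simp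
  have B: "((G + u) + (Z - x 1)) \<bullet> (Y - Z) \<ge> 0"
    using FO[OF Kconv ZK _ ymin_t, of Y] YK_A GS by simp
  have C: "((G + u) + (Z - x 1)) \<bullet> (V - Z) \<ge> 0"
    using FO[OF Kconv ZK VK ymin_t] GS by simp
  have D: "((G + u) + (X - x 1)) \<bullet> V \<le> ((G + u) + (X - x 1)) \<bullet> Z"
  proof -
    have "(\<eta> *\<^sub>R (\<Sum>s=1..t. g s) + (x t - x 1)) \<bullet> v t \<le> (\<eta> *\<^sub>R (\<Sum>s=1..t. g s) + (x t - x 1)) \<bullet> Z"
      using v_min t ZK by blast
    then show ?thesis unfolding GS X_def V_def .
  qed
  note cr = core[OF s0 s1 A B C D]
  have xs: "x (t+1) = (1-\<sigma>) *\<^sub>R X + \<sigma> *\<^sub>R V" using x_step t by (simp add: X_def V_def)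
  have phit: "ofw_phi \<eta> g x y t = (\<Sum>s=1..m. g s \<bullet> x s) + g t \<bullet> X - (S' + g t) \<bullet> Z
      + (1 / (6*\<eta>)) * (norm ((1-\<sigma>) *\<^sub>R X + \<sigma> *\<^sub>R V - Z))^2
      - (1 / (2*\<eta>)) * (norm (Z - x 1))^2"
  proof -
    have sp1: "(\<Sum>s=1..t. g s \<bullet> (x s - Z)) = (\<Sum>s=1..m. g s \<bullet> x s) + g t \<bullet> X - (S' + g t) \<bullet> Z"
      by (simp add: tm inner_diff_right sum_subtractf inner_sum_left S'_def X_def inner_add_left)
    show ?thesis unfolding ofw_phi_def xs Z_def[symmetric] sp1 by simp
  qed
  have phim: "ofw_phi \<eta> g x y (t-1) = (\<Sum>s=1..m. g s \<bullet> x s) - S' \<bullet> Y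
      + (1 / (6*\<eta>)) * (norm (X - Y))^2
      - (1 / (2*\<eta>)) * (norm (Y - x 1))^2"
    unfolding ofw_phi_def Y_def X_def
    by (simp add: tm inner_diff_right sum_subtractf inner_sum_left S'_def)
  define Q where "Q = u \<bullet> X - (G + u) \<bullet> Z - 1/2 * (norm (Z - x 1))^2 + G \<bullet> Y + 1/2 * (norm (Y - x 1))^2
     + 1/6 * ((norm ((1-\<sigma>) *\<^sub>R X + \<sigma> *\<^sub>R V - Z))^2 - (norm (X - Y))^2)"
  have diff: "ofw_phi \<eta> g x y t - ofw_phi \<eta> g x y (t-1) = Q / \<eta>"
    unfolding phit phim Q_def G_def u_def using eta0
    by (simp add: field_simps inner_add_left)
  have "Q / \<eta> \<le> (4/(3*\<sigma>) * (norm u)^2 + \<sigma>^2/6 * (norm (X - V))^2) / \<eta>"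
    using cr eta0 by (simp add: Q_def divide_right_mono)
  also have "\<dots> = (4*\<eta>/(3*\<sigma>)) * (norm (g t))^2 + (\<sigma>^2/(6*\<eta>)) * (norm (X - V))^2"
    using eta0 s0 by (simp add: u_def power2_eq_square field_simps)
  also have "\<dots> = 2*D / (L * 3 powr (3/4) * real T powr (1/4)) * (norm (g t))^2
             + L / (D * 3 powr (3/4) * real T powr (1/4)) * (norm (x t - v t))^2"
  proof -
    have c1: "4*\<eta>/(3*\<sigma>) = 2*D / (L * 3 powr (3/4) * real T powr (1/4))"
      unfolding eta sig mult.assoc r33 using r0 Lpos Dpos by (simp add: field_simps power2_eq_square power3_eq_cube)
    have c2: "\<sigma>^2/(6*\<eta>) = L / (D * 3 powr (3/4) * real T powr (1/4))"
      unfolding eta sig mult.assoc r33 using r0 Lpos Dpos by (simp add: field_simps power2_eq_square power3_eq_cube)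
    show ?thesis unfolding c1 c2 X_def V_def ..
  qed
  finally show "ofw_phi \<eta> g x y t - ofw_phi \<eta> g x y (t-1)
           \<le> 2*D / (L * 3 powr (3/4) * real T powr (1/4)) * (norm (g t))^2
             + L / (D * 3 powr (3/4) * real T powr (1/4)) * (norm (x t - v t))^2"
    using diff by simp
qed

end
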